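(* Assume $\operatorname{non}(\mathcal N)=\mathfrak c$. Then $\mathcal{AN}_{\mathfrak c}$ is strongly $2^{\mathfrak c}$-algebrable in $\left(\mathbb R^{\mathbb R}\right)^{\mathfrak c}$.
   Context: For a regular infinite cardinal $\kappa$, a $\kappa$-sequence $(x_\alpha)_{\alpha<\kappa}$ converges to $x$ if for every neighbourhood $U$ of $x$ there is $\alpha_0<\kappa$ with $x_\alpha\in U$ for all $\alpha_0<\alpha<\kappa$; $\left(\mathbb R^{\mathbb R}\right)^{\kappa}$ is the commutative real algebra of $\kappa$-sequences of functions $\mathbb R\to\mathbb R$ with indexwise operations. $\operatorname{non}(\mathcal N)$ is the least cardinality of a non-null subset of $[0,1]$, $\mathfrak c=2^{\aleph_0}$. $\mathcal{AN}_{\kappa}$: $\kappa$-sequences of Lebesgue measurable functions $f_\alpha:\mathbb R\to\mathbb R$ converging pointwise a.e. to a function that is not Lebesgue measurable. $S$ is strongly $\mu$-algebrable if there is a set $X$ of $\mu$ algebraically independent elements such that every nonzero element of the (non-unital) algebra generated by $X$ belongs to $S$. *)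

theory Defs
  imports "HOL-Analysis.Analysis"
begin

text \<open>A continuum-length sequence is indexed by the reals, ordered by a well-order W
  on UNIV which is a cardinal order (initial ordinal), i.e. has order type c.
  Sequences of functions R to R are thus elements of type real => real => real
  (index => point => value); the algebra operations are pointwise.\<close>

definition wconv :: "real rel \<Rightarrow> (real \<Rightarrow> real) \<Rightarrow> real \<Rightarrow> bool" where
  "wconv W s l \<longleftrightarrow>
     (\<forall>U. open U \<and> l \<in> U \<longrightarrow> (\<exists>a0. \<forall>a. (a0, a) \<in> W \<and> a \<noteq> a0 \<longrightarrow> s a \<in> U))"

definition nonN_eq_c :: bool where
  "nonN_eq_c \<longleftrightarrow> (\<forall>A::real set. A \<subseteq> {0..1} \<and> A \<notin> null_sets lebesgue \<longrightarrow>
       (card_of (UNIV::real set), card_of A) \<in> ordLeq)"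

definition AN_c :: "real rel \<Rightarrow> (real \<Rightarrow> real \<Rightarrow> real) set" where
  "AN_c W = {F. (\<forall>a. F a \<in> borel_measurable lebesgue) \<and>
      (\<exists>g. g \<notin> borel_measurable lebesgue \<and> (AE x in lebesgue. wconv W (\<lambda>a. F a x) (g x)))}"

text \<open>Polynomials in variables 0..n-1: coefficient function on exponent vectors
  (monomials), finitely supported.\<close>
definition is_poly :: "nat \<Rightarrow> ((nat \<Rightarrow> nat) \<Rightarrow> real) \<Rightarrow> bool" where
  "is_poly n c \<longleftrightarrow> finite {m. c m \<noteq> 0} \<and> (\<forall>m. c m \<noteq> 0 \<longrightarrow> (\<forall>i\<ge>n. m i = 0))"

definition no_const :: "((nat \<Rightarrow> nat) \<Rightarrow> real) \<Rightarrow> bool" where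
  "no_const c \<longleftrightarrow> c (\<lambda>_. 0) = 0"

definition poly_eval :: "((nat \<Rightarrow> nat) \<Rightarrow> real) \<Rightarrow> (nat \<Rightarrow> real \<Rightarrow> real \<Rightarrow> real)
    \<Rightarrow> real \<Rightarrow> real \<Rightarrow> real" where
  "poly_eval c F = (\<lambda>a x. \<Sum>m\<in>{m. c m \<noteq> 0}. c m * (\<Prod>i\<in>{i. m i \<noteq> 0}. F i a x ^ m i))"

definition alg_independent :: "(real \<Rightarrow> real \<Rightarrow> real) set \<Rightarrow> bool" where
  "alg_independent X \<longleftrightarrow> (\<forall>n c F. is_poly n c \<and> c \<noteq> (\<lambda>_. 0) \<and> inj_on F {..<n} \<and>
       F ` {..<n} \<subseteq> X \<longrightarrow> poly_eval c F \<noteq> (\<lambda>_ _. 0))"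

text \<open>The non-unital algebra generated by X.\<close>
definition gen_algebra :: "(real \<Rightarrow> real \<Rightarrow> real) set \<Rightarrow> (real \<Rightarrow> real \<Rightarrow> real) set" where
  "gen_algebra X = {poly_eval c F | n c F. is_poly n c \<and> no_const c \<and> F ` {..<n} \<subseteq> X}"

definition strongly_algebrable :: "'k rel \<Rightarrow> (real \<Rightarrow> real \<Rightarrow> real) set \<Rightarrow> bool" where
  "strongly_algebrable mu S \<longleftrightarrow> (\<exists>X. (card_of X, mu) \<in> ordIso \<and> alg_independent X \<and>
       (\<forall>f\<in>gen_algebra X. f \<noteq> (\<lambda>_ _. 0) \<longrightarrow> f \<in> S))"

end

theory Submission
  imports Defs "HOL-Computational_Algebra.Polynomial"
begin


lemma real_inj_natset: obtains j :: "real \<Rightarrow> nat set" where "inj j"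
proof -
  have "(UNIV::real set) \<approx> (UNIV::nat set set)"
    using nat_sets_eqpoll_reals eqpoll_sym by blast
  then obtain j :: "real \<Rightarrow> nat set" where "bij_betw j UNIV UNIV"
    unfolding eqpoll_def by blast
  then show ?thesis using that bij_betw_imp_inj_on by blast
qed

lemma natfun_lepoll_real: "(UNIV::(nat \<Rightarrow> real) set) \<lesssim> (UNIV::real set)"
proof -
  obtain j :: "real \<Rightarrow> nat set" where j: "inj j" by (rule real_inj_natset)
  define G where "G f = {prod_encode (i,k) | i k. k \<in> j (f i)}" for f :: "nat \<Rightarrow> real"
  have "inj G"
  proof (rule injI)
    fix f g assume eq: "G f = G g"
    show "f = g"
    proof
      fix i
      have "j (f i) = j (g i)"
      proof -
        have "k \<in> j (f i) \<longleftrightarrow> prod_encode (i,k) \<in> G f" for k f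
          unfolding G_def by (auto dest: inj_onD[OF inj_prod_encode, simplified])
        then show ?thesis using eq by blast
      qed
      then show "f i = g i" using j by (simp add: inj_eq)
    qed
  qed
  then have "(UNIV::(nat \<Rightarrow> real) set) \<lesssim> (UNIV::nat set set)"
    unfolding lepoll_def by blast
  also have "(UNIV::nat set set) \<lesssim> (UNIV::real set)"
    using nat_sets_eqpoll_reals eqpoll_imp_lepoll by blast
  finally show ?thesis .
qed

lemma list_lepoll_real:
  assumes "(UNIV::'a set) \<lesssim> (UNIV::real set)"
  shows "(UNIV::'a list set) \<lesssim> (UNIV::real set)"
proof -
  obtain g :: "'a \<Rightarrow> real" where g: "inj g" using assms unfolding lepoll_def by blast
  define H where "H xs = (\<lambda>i. if i = 0 then real (length xs) else if i \<le> length xs then g (xs ! (i - 1)) else 0)"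
    for xs :: "'a list"
  have "inj H"
  proof (rule injI)
    fix xs ys assume eq: "H xs = H ys"
    have len: "length xs = length ys" using fun_cong[OF eq, of 0] unfolding H_def by simp
    show "xs = ys"
    proof (rule nth_equalityI[OF len])
      fix i assume i: "i < length xs"
      have "H xs (Suc i) = H ys (Suc i)" using eq by simp
      then have "g (xs ! i) = g (ys ! i)" using i len unfolding H_def by simp
      then show "xs ! i = ys ! i" using g by (simp add: inj_eq)
    qed
  qed
  then have "(UNIV::'a list set) \<lesssim> (UNIV::(nat \<Rightarrow> real) set)"
    unfolding lepoll_def by blast
  also note natfun_lepoll_real
  finally show ?thesis .
qed

lemma real_times_lepoll: "(UNIV::(real \<times> real) set) \<lesssim> (UNIV::real set)"
proof -
  have "(card_of ((UNIV::real set) \<times> (UNIV::real set)), card_of (UNIV::real set)) \<in> ordIso"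
    by (rule card_of_Times_same_infinite) (simp add: infinite_UNIV_char_0)
  then have "(UNIV::real set) \<times> (UNIV::real set) \<approx> (UNIV::real set)"
    using eqpoll_iff_card_of_ordIso by blast
  then show ?thesis by (simp add: eqpoll_imp_lepoll)
qed

lemma prod_lepoll_real:
  assumes "(UNIV::'a set) \<lesssim> (UNIV::real set)" "(UNIV::'b set) \<lesssim> (UNIV::real set)"
  shows "(UNIV::('a \<times> 'b) set) \<lesssim> (UNIV::real set)"
proof -
  have "(UNIV::('a \<times> 'b) set) = (UNIV::'a set) \<times> (UNIV::'b set)" by simp
  also have "\<dots> \<lesssim> (UNIV::real set) \<times> (UNIV::real set)"
    using times_lepoll_mono assms by blast
  also have "\<dots> \<lesssim> (UNIV::real set)" using real_times_lepoll by simp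
  finally show ?thesis .
qed

type_synonym code = "nat set \<times> (real list \<times> real list list)"

lemma code_surj: obtains e :: "real \<Rightarrow> code" where "surj e"
proof -
  have a: "(UNIV::real list set) \<lesssim> (UNIV::real set)" by (rule list_lepoll_real) simp
  have b: "(UNIV::real list list set) \<lesssim> (UNIV::real set)" by (rule list_lepoll_real[OF a])
  have c: "(UNIV::nat set set) \<lesssim> (UNIV::real set)"
    using nat_sets_eqpoll_reals eqpoll_imp_lepoll by blast
  have "(UNIV::code set) \<lesssim> (UNIV::real set)"
    by (intro prod_lepoll_real c a b)
  then obtain e :: "real \<Rightarrow> code" where "UNIV \<subseteq> e ` UNIV" unfolding lepoll_iff by blast
  then show ?thesis using that by blast
qed


lemma null_translate:
  fixes a :: real
  assumes "S \<in> null_sets lebesgue"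
  shows "((+) a ` S) \<in> null_sets lebesgue"
proof -
  have m: "(+) a ` S \<in> sets lebesgue"
    using lebesgue_sets_translation[of S a] assms by auto
  have "emeasure lebesgue ((+) a ` S) = emeasure lebesgue S"
    using emeasure_lebesgue_affine [of 1 a S] by (simp add: ac_simps cong: image_cong_simp)
  then have "emeasure lebesgue ((+) a ` S) = 0" by (simp add: null_setsD1[OF assms])
  then show ?thesis using m by (simp add: null_sets_def)
qed

lemma small_null:
  fixes B :: "real set"
  assumes nonN: "nonN_eq_c"
    and small: "(card_of B, card_of (UNIV::real set)) \<in> ordLess"
  shows "B \<in> null_sets lebesgue"
proof -
  have piece: "B \<inter> {real_of_int k..real_of_int k + 1} \<in> null_sets lebesgue" for k :: int
  proof -
    define C where "C = (\<lambda>x. x - real_of_int k) ` (B \<inter> {real_of_int k..real_of_int k + 1})"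
    have sub: "C \<subseteq> {0..1}" unfolding C_def by auto
    have "(card_of C, card_of B) \<in> ordLeq"
      unfolding C_def by (meson card_of_image card_of_mono1 inf_le1 ordLeq_transitive)
    then have "(card_of C, card_of (UNIV::real set)) \<in> ordLess"
      using small ordLeq_ordLess_trans by blast
    then have "C \<in> null_sets lebesgue"
      using nonN sub unfolding nonN_eq_c_def using not_ordLess_ordLeq by blast
    then have "(+) (real_of_int k) ` C \<in> null_sets lebesgue" by (rule null_translate)
    moreover have "(+) (real_of_int k) ` C = B \<inter> {real_of_int k..real_of_int k + 1}"
      unfolding C_def image_image by simp
    ultimately show ?thesis by simp
  qed
  have "B = (\<Union>k::int. B \<inter> {real_of_int k..real_of_int k + 1})"
  proof (safe)
    fix x assume "x \<in> B"
    then have "x \<in> B \<inter> {real_of_int \<lfloor>x\<rfloor>..real_of_int \<lfloor>x\<rfloor> + 1}"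
      using of_int_floor_le[of x] real_of_int_floor_add_one_gt[of x] by auto
    then show "x \<in> (\<Union>k::int. B \<inter> {real_of_int k..real_of_int k + 1})"
      by blast
  qed
  also have "\<dots> \<in> null_sets lebesgue"
    using piece by (intro null_sets_UN) auto
  finally show ?thesis .
qed

lemma big_if_nonnull:
  fixes B :: "real set"
  assumes nonN: "nonN_eq_c" and nn: "B \<notin> null_sets lebesgue"
  shows "(card_of (UNIV::real set), card_of B) \<in> ordLeq"
proof -
  have "(card_of B, card_of (UNIV::real set)) \<notin> ordLess"
    using small_null[OF nonN] nn by blast
  then show ?thesis
    using ordLess_or_ordLeq[of "card_of B" "card_of (UNIV::real set)"] card_of_Well_order by blast
qed




definition ri :: "nat \<Rightarrow> real \<times> real" where
  "ri i = (of_rat (fst (from_nat i :: rat \<times> rat)), of_rat (snd (from_nat i :: rat \<times> rat)))"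

definition Kc :: "nat set \<Rightarrow> real set" where
  "Kc N = - (\<Union>i\<in>N. {fst (ri i)<..<snd (ri i)})"

lemma closed_Kc: "closed (Kc N)"
  unfolding Kc_def by (intro closed_Compl open_UN) auto

lemma closed_is_Kc:
  assumes "closed C"
  shows "C = Kc {i. {fst (ri i)<..<snd (ri i)} \<inter> C = {}}"
proof
  show "C \<subseteq> Kc {i. {fst (ri i)<..<snd (ri i)} \<inter> C = {}}"
    unfolding Kc_def by auto
  show "Kc {i. {fst (ri i)<..<snd (ri i)} \<inter> C = {}} \<subseteq> C"
  proof
    fix x assume xK: "x \<in> Kc {i. {fst (ri i)<..<snd (ri i)} \<inter> C = {}}"
    show "x \<in> C"
    proof (rule ccontr)
      assume "x \<notin> C"
      then obtain e where e: "e > 0" "ball x e \<subseteq> - C"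
        using assms open_contains_ball[of "-C"] by auto
      obtain a where a: "a \<in> \<rat>" "x - e < a" "a < x"
        using Rats_dense_in_real[of "x - e" x] e by auto
      obtain b where b: "b \<in> \<rat>" "x < b" "b < x + e"
        using Rats_dense_in_real[of x "x + e"] e by auto
      obtain ra where ra: "a = of_rat ra" using a(1) Rats_cases by blast
      obtain rb where rb: "b = of_rat rb" using b(1) Rats_cases by blast
      define i where "i = to_nat (ra, rb)"
      have ri: "ri i = (a, b)" unfolding ri_def i_def using ra rb by simp
      have "{a<..<b} \<subseteq> ball x e" using a b by (auto simp: dist_real_def)
      then have "{fst (ri i)<..<snd (ri i)} \<inter> C = {}" using e ri by auto
      moreover have "x \<in> {fst (ri i)<..<snd (ri i)}" using ri a b by simp
      ultimately show False using xK unfolding Kc_def by blast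
    qed
  qed
qed

lemma nonnull_contains_Kc:
  assumes M: "M \<in> sets lebesgue" "M \<notin> null_sets lebesgue"
  obtains N where "Kc N \<subseteq> M" "Kc N \<notin> null_sets lebesgue"
proof -
  have pos: "emeasure lebesgue M > 0" using M by (simp add: null_sets_def zero_less_iff_neq_zero)
  obtain e :: real where e: "e > 0" "ennreal e < emeasure lebesgue M"
  proof (cases "emeasure lebesgue M = \<infinity>")
    case True then show ?thesis using that[of 1] by simp
  next
    case False
    define r where "r = enn2real (emeasure lebesgue M)"
    have r: "r > 0" using pos False unfolding r_def
      by (simp add: enn2real_positive_iff less_top)
    have eqM: "emeasure lebesgue M = ennreal r"
      using False unfolding r_def by (simp add: ennreal_enn2real less_top)
    have "ennreal (r/2) < ennreal r" using r by (subst ennreal_less_iff) auto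
    then have "r/2 > 0" "ennreal (r/2) < emeasure lebesgue M" using r eqM by auto
    then show ?thesis using that by blast
  qed
  obtain T where T: "closed T" "T \<subseteq> M" "M - T \<in> lmeasurable" "emeasure lebesgue (M - T) < ennreal e"
    using sets_lebesgue_inner_closed[OF M(1) e(1)] by blast
  have "T \<notin> null_sets lebesgue"
  proof
    assume Tn: "T \<in> null_sets lebesgue"
    have "M = (M - T) \<union> T" using T(2) by blast
    then have "emeasure lebesgue M = emeasure lebesgue (M - T)"
      using emeasure_Un_null_set[of "M - T" lebesgue T] T(3) Tn by (simp add: fmeasurable_def)
    then show False using T(4) e(2) by simp
  qed
  then show ?thesis using that[of "{i. {fst (ri i)<..<snd (ri i)} \<inter> T = {}}"]
    closed_is_Kc[OF T(1)] T(2) by auto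
qed




locale setting =
  fixes W :: "real rel" and e :: "real \<Rightarrow> code"
  assumes co: "card_order W" and nonN: "nonN_eq_c" and esurj: "surj e"
begin

lemma wo: "well_order_on UNIV W" using co unfolding card_order_on_def by simp
lemma FieldW: "Field W = UNIV" using wo well_order_on_Field by metis
lemma CardW: "Card_order W" using co FieldW by simp
lemma woW: "wo_rel W" using wo FieldW unfolding wo_rel_def by simp

lemma underS_small: "(card_of (underS W a), card_of (UNIV::real set)) \<in> ordLess"
proof -
  have "(card_of (underS W a), W) \<in> ordLess" using card_of_underS[OF CardW] FieldW by simp
  moreover have "(W, card_of (UNIV::real set)) \<in> ordIso" using card_of_unique[OF co] .
  ultimately show ?thesis using ordLess_ordIso_trans by blast
qed

lemma underS_null: "underS W a \<in> null_sets lebesgue"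
  using small_null[OF nonN underS_small] .

lemma no_max: "\<exists>a. x \<in> underS W a"
proof -
  have "\<not> (\<exists>a. Field W = under W a)"
    using Card_order_infinite_not_under[OF CardW] FieldW by (simp add: infinite_UNIV_char_0)
  then obtain a where "a \<notin> under W x" using FieldW by auto
  then have "(a, x) \<notin> W" by (simp add: under_def)
  moreover have "(a, x) \<in> W \<or> (x, a) \<in> W" using wo_rel.TOTALS[OF woW] FieldW by auto
  moreover have "(x, x) \<in> W" using wo_rel.REFL[OF woW] FieldW by (auto simp: refl_on_def)
  ultimately have "x \<noteq> a" "(x, a) \<in> W" by auto
  then show ?thesis unfolding underS_def by blast
qed

lemma wfW: "wf (W - Id)" using wo unfolding well_order_on_def by simp

definition good :: "real \<Rightarrow> bool" where
  "good \<alpha> \<longleftrightarrow> Kc (fst (e \<alpha>)) \<notin> null_sets lebesgue"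

definition pt :: "real \<Rightarrow> real" where
  "pt = wfrec (W - Id) (\<lambda>f \<alpha>. SOME x. x \<in> Kc (fst (e \<alpha>)) \<and> x \<notin> f ` underS W \<alpha>)"

definition d :: "real \<Rightarrow> real list \<times> real list list" where
  "d x = snd (e (SOME \<alpha>. good \<alpha> \<and> pt \<alpha> = x))"

lemma pt_eq: "pt \<alpha> = (SOME x. x \<in> Kc (fst (e \<alpha>)) \<and> x \<notin> pt ` underS W \<alpha>)"
proof -
  have "pt \<alpha> = (SOME x. x \<in> Kc (fst (e \<alpha>)) \<and> x \<notin> (cut pt (W - Id) \<alpha>) ` underS W \<alpha>)"
    unfolding pt_def by (subst wfrec[OF wfW]) simp
  moreover have "(cut pt (W - Id) \<alpha>) ` underS W \<alpha> = pt ` underS W \<alpha>"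
    by (rule image_cong) (auto simp: cut_def underS_def)
  ultimately show ?thesis by simp
qed

lemma pt_good:
  assumes "good \<alpha>"
  shows "pt \<alpha> \<in> Kc (fst (e \<alpha>)) \<and> pt \<alpha> \<notin> pt ` underS W \<alpha>"
proof -
  have "\<exists>x. x \<in> Kc (fst (e \<alpha>)) \<and> x \<notin> pt ` underS W \<alpha>"
  proof (rule ccontr)
    assume "\<not> ?thesis"
    then have sub: "Kc (fst (e \<alpha>)) \<subseteq> pt ` underS W \<alpha>" by blast
    have "(card_of (Kc (fst (e \<alpha>))), card_of (underS W \<alpha>)) \<in> ordLeq"
      using card_of_mono1[OF sub] card_of_image ordLeq_transitive by blast
    then have "(card_of (Kc (fst (e \<alpha>))), card_of (UNIV::real set)) \<in> ordLess"
      using underS_small ordLeq_ordLess_trans by blast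
    moreover have "(card_of (UNIV::real set), card_of (Kc (fst (e \<alpha>)))) \<in> ordLeq"
      using big_if_nonnull[OF nonN] assms unfolding good_def by blast
    ultimately show False using not_ordLess_ordLeq by blast
  qed
  then show ?thesis by (subst (1 2) pt_eq) (rule someI_ex)
qed

lemma fiber_Kc:
  assumes "Kc N \<notin> null_sets lebesgue"
  shows "\<exists>x\<in>Kc N. d x = q"
proof -
  obtain \<alpha> where ea: "e \<alpha> = (N, q)" using esurj by (metis surjD)
  have g: "good \<alpha>" using assms ea unfolding good_def by simp
  define \<beta> where "\<beta> = (SOME \<beta>. good \<beta> \<and> pt \<beta> = pt \<alpha>)"
  have b: "good \<beta> \<and> pt \<beta> = pt \<alpha>" unfolding \<beta>_def by (rule someI[of _ \<alpha>]) (simp add: g)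
  have "\<beta> = \<alpha>"
  proof (rule ccontr)
    assume ne: "\<beta> \<noteq> \<alpha>"
    have "(\<beta>, \<alpha>) \<in> W \<or> (\<alpha>, \<beta>) \<in> W" using wo_rel.TOTALS[OF woW] FieldW by auto
    then show False
    proof
      assume "(\<beta>, \<alpha>) \<in> W"
      then have "\<beta> \<in> underS W \<alpha>" using ne unfolding underS_def by auto
      then show False using pt_good[OF g] b by (metis image_eqI)
    next
      assume "(\<alpha>, \<beta>) \<in> W"
      then have "\<alpha> \<in> underS W \<beta>" using ne unfolding underS_def by auto
      then show False using pt_good[of \<beta>] b by (metis image_eqI)
    qed
  qed
  then have "d (pt \<alpha>) = q" unfolding d_def \<beta>_def[symmetric] using ea by simp
  moreover have "pt \<alpha> \<in> Kc N" using pt_good[OF g] ea by simp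
  ultimately show ?thesis by blast
qed

lemma fiber:
  assumes "M \<in> sets lebesgue" "M \<notin> null_sets lebesgue"
  shows "\<exists>x\<in>M. d x = q"
proof -
  obtain N where "Kc N \<subseteq> M" "Kc N \<notin> null_sets lebesgue"
    using nonnull_contains_Kc[OF assms] by blast
  then show ?thesis using fiber_Kc by blast
qed

end




definition Pv :: "((nat \<Rightarrow> nat) \<Rightarrow> real) \<Rightarrow> (nat \<Rightarrow> real) \<Rightarrow> real" where
  "Pv c y = (\<Sum>m\<in>{m. c m \<noteq> 0}. c m * (\<Prod>i\<in>{i. m i \<noteq> 0}. y i ^ m i))"

lemma poly_eval_Pv: "poly_eval c F a x = Pv c (\<lambda>i. F i a x)"
  unfolding poly_eval_def Pv_def by simp

lemma supp_sub:
  assumes "is_poly n c" "c m \<noteq> 0" shows "{i. m i \<noteq> 0} \<subseteq> {..<n}"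
proof
  fix i assume "i \<in> {i. m i \<noteq> 0}"
  moreover have "\<forall>i\<ge>n. m i = 0" using assms unfolding is_poly_def by blast
  ultimately show "i \<in> {..<n}" by (metis lessThan_iff mem_Collect_eq not_less)
qed

lemma Pv_cong:
  assumes "is_poly n c" "\<And>i. i < n \<Longrightarrow> y i = y' i"
  shows "Pv c y = Pv c y'"
  unfolding Pv_def
proof (rule sum.cong[OF refl])
  fix m assume "m \<in> {m. c m \<noteq> 0}"
  then have "{i. m i \<noteq> 0} \<subseteq> {..<n}" using supp_sub[OF assms(1)] by simp
  then show "c m * (\<Prod>i\<in>{i. m i \<noteq> 0}. y i ^ m i) = c m * (\<Prod>i\<in>{i. m i \<noteq> 0}. y' i ^ m i)"
    using assms(2) by (intro arg_cong[where f="(*) (c m)"] prod.cong) auto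
qed

lemma Pv_zero:
  assumes "is_poly n c"
  shows "Pv c (\<lambda>_. 0) = c (\<lambda>_. 0)"
proof -
  have fin: "finite {m. c m \<noteq> 0}" using assms unfolding is_poly_def by simp
  have "Pv c (\<lambda>_. 0) = (\<Sum>m\<in>{m. c m \<noteq> 0}. if m = (\<lambda>_. 0) then c m else 0)"
    unfolding Pv_def
  proof (rule sum.cong[OF refl])
    fix m assume m: "m \<in> {m. c m \<noteq> 0}"
    show "c m * (\<Prod>i\<in>{i. m i \<noteq> 0}. (0::real) ^ m i) = (if m = (\<lambda>_. 0) then c m else 0)"
    proof (cases "m = (\<lambda>_. 0)")
      case True then show ?thesis by simp
    next
      case False
      then obtain i where i: "m i \<noteq> 0" by auto
      have "finite {i. m i \<noteq> 0}" using supp_sub[OF assms] m finite_subset by blast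
      then have "(\<Prod>i\<in>{i. m i \<noteq> 0}. (0::real) ^ m i) = 0"
        using i by (intro prod_zero) auto
      then show ?thesis using False by simp
    qed
  qed
  also have "\<dots> = c (\<lambda>_. 0)" using fin by (simp add: sum.delta')
  finally show ?thesis .
qed

lemma digits_inj:
  fixes N :: nat
  assumes "\<forall>i<n. m i < N" "\<forall>i<n. m' i < N"
    "(\<Sum>i<n. m i * N ^ i) = (\<Sum>i<n. m' i * N ^ i)"
  shows "\<forall>i<n. m i = m' i"
  using assms
proof (induction n arbitrary: m m')
  case 0 then show ?case by simp
next
  case (Suc n)
  have split: "(\<Sum>i<Suc n. f i * N ^ i) = f 0 + N * (\<Sum>i<n. f (Suc i) * N ^ i)" for f :: "nat \<Rightarrow> nat"
    unfolding sum.lessThan_Suc_shift by (simp add: sum_distrib_left algebra_simps)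
  have a: "m 0 < N" "m' 0 < N" using Suc.prems by auto
  have eq: "m 0 + N * (\<Sum>i<n. m (Suc i) * N ^ i) = m' 0 + N * (\<Sum>i<n. m' (Suc i) * N ^ i)"
    using Suc.prems(3) split by metis
  then have "(m 0 + N * (\<Sum>i<n. m (Suc i) * N ^ i)) mod N = (m' 0 + N * (\<Sum>i<n. m' (Suc i) * N ^ i)) mod N"
    by simp
  then have m0: "m 0 = m' 0" using a by simp
  have N0: "N > 0" using a by simp
  have "N * (\<Sum>i<n. m (Suc i) * N ^ i) = N * (\<Sum>i<n. m' (Suc i) * N ^ i)"
    using eq m0 by simp
  then have AB: "(\<Sum>i<n. m (Suc i) * N ^ i) = (\<Sum>i<n. m' (Suc i) * N ^ i)"
    using N0 by simp
  have b1: "\<forall>i<n. m (Suc i) < N" "\<forall>i<n. m' (Suc i) < N" using Suc.prems(1,2) by auto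
  have "\<forall>i<n. m (Suc i) = m' (Suc i)"
    using Suc.IH[of "\<lambda>i. m (Suc i)" "\<lambda>i. m' (Suc i)", OF b1 AB] .
  then show ?case using m0 by (auto simp: less_Suc_eq_0_disj)
qed

lemma Pv_nonroot:
  assumes P: "is_poly n c" and nz: "c \<noteq> (\<lambda>_. 0)"
  shows "\<exists>y. Pv c y \<noteq> 0"
proof -
  define M where "M = {m. c m \<noteq> 0}"
  have finM: "finite M" using P unfolding is_poly_def M_def by simp
  obtain m0 where m0: "m0 \<in> M" using nz unfolding M_def by auto
  define N where "N = Suc (\<Sum>m\<in>M. \<Sum>i<n. m i)"
  have bound: "m i < N" if "m \<in> M" "i < n" for m i
  proof -
    have "m i \<le> (\<Sum>i<n. m i)" using that(2) by (intro member_le_sum) auto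
    also have "\<dots> \<le> (\<Sum>m\<in>M. \<Sum>i<n. m i)"
      using that(1) finM by (intro member_le_sum) auto
    finally show ?thesis unfolding N_def by simp
  qed
  define E where "E m = (\<Sum>i<n. m i * N ^ i)" for m :: "nat \<Rightarrow> nat"
  have Einj: "m = m'" if "m \<in> M" "m' \<in> M" "E m = E m'" for m m'
  proof
    fix i
    show "m i = m' i"
    proof (cases "i < n")
      case True
      then show ?thesis using digits_inj[of n m N m'] bound that unfolding E_def by auto
    next
      case False
      have "\<forall>i\<ge>n. m i = 0" "\<forall>i\<ge>n. m' i = 0" using that P unfolding is_poly_def M_def by auto
      then show ?thesis using False by simp
    qed
  qed
  define p where "p = (\<Sum>m\<in>M. monom (c m) (E m))"
  have "coeff p (E m0) = (\<Sum>m\<in>M. if m = m0 then c m else 0)"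
    unfolding p_def coeff_sum
    by (rule sum.cong[OF refl]) (auto simp: coeff_monom dest: Einj[OF _ m0])
  also have "\<dots> = c m0" using finM m0 by (simp add: sum.delta')
  finally have "coeff p (E m0) \<noteq> 0" using m0 unfolding M_def by simp
  then have "p \<noteq> 0" by auto
  then have "finite {t. poly p t = 0}" by (rule poly_roots_finite)
  then obtain t where t: "poly p t \<noteq> 0"
    using ex_new_if_finite[OF infinite_UNIV_char_0] by blast
  define y where "y i = t ^ (N ^ i)" for i
  have "Pv c y = (\<Sum>m\<in>M. c m * t ^ E m)"
    unfolding Pv_def M_def[symmetric]
  proof (rule sum.cong[OF refl])
    fix m assume m: "m \<in> M"
    have sub: "{i. m i \<noteq> 0} \<subseteq> {..<n}" using supp_sub[OF P] m unfolding M_def by simp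
    have "(\<Prod>i\<in>{i. m i \<noteq> 0}. y i ^ m i) = (\<Prod>i\<in>{i. m i \<noteq> 0}. t ^ (m i * N ^ i))"
      unfolding y_def by (simp add: power_mult[symmetric] mult.commute)
    also have "\<dots> = t ^ (\<Sum>i\<in>{i. m i \<noteq> 0}. m i * N ^ i)" by (simp add: power_sum)
    also have "(\<Sum>i\<in>{i. m i \<noteq> 0}. m i * N ^ i) = E m"
      unfolding E_def using sub by (intro sum.mono_neutral_left) auto
    finally show "c m * (\<Prod>i\<in>{i. m i \<noteq> 0}. y i ^ m i) = c m * t ^ E m" by simp
  qed
  also have "\<dots> = poly p t" unfolding p_def by (simp add: poly_sum poly_monom)
  finally have "Pv c y \<noteq> 0" using t by simp
  then show ?thesis by blast
qed




definition hq :: "real set \<Rightarrow> real list \<times> real list list \<Rightarrow> real" where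
  "hq s q = (case List.find (\<lambda>l. set (tl l) = s \<inter> set (fst q)) (snd q) of Some l \<Rightarrow> hd l | None \<Rightarrow> 0)"

lemma code_exists:
  assumes fin: "finite \<Sigma>"
  shows "\<exists>q. \<forall>s\<in>\<Sigma>. hq s q = t s"
proof -
  define wit where "wit s s' = (SOME a::real. (a \<in> s \<and> a \<notin> s') \<or> (a \<in> s' \<and> a \<notin> s))" for s s'
  define Wt where "Wt = (\<lambda>(s, s'). wit s s') ` (\<Sigma> \<times> \<Sigma>)"
  have finW: "finite Wt" unfolding Wt_def using fin by simp
  obtain xs where xs: "set xs = Wt" using finite_list[OF finW] by blast
  have sep: "s \<inter> set xs \<noteq> s' \<inter> set xs" if "s \<in> \<Sigma>" "s' \<in> \<Sigma>" "s \<noteq> s'" for s s'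
  proof -
    have "\<exists>a. (a \<in> s \<and> a \<notin> s') \<or> (a \<in> s' \<and> a \<notin> s)" using that(3) by blast
    then have w: "(wit s s' \<in> s \<and> wit s s' \<notin> s') \<or> (wit s s' \<in> s' \<and> wit s s' \<notin> s)"
      unfolding wit_def by (rule someI_ex)
    have "wit s s' \<in> set xs" using xs that unfolding Wt_def by force
    then show ?thesis using w by blast
  qed
  obtain sl where sl: "set sl = \<Sigma>" using finite_list[OF fin] by blast
  define tab where "tab = map (\<lambda>s. t s # sorted_list_of_set (s \<inter> set xs)) sl"
  have "hq s (xs, tab) = t s" if s: "s \<in> \<Sigma>" for s
  proof -
    let ?P = "\<lambda>l. set (tl l) = s \<inter> set xs"
    have ex: "\<exists>l. l \<in> set tab \<and> ?P l"
      using s sl unfolding tab_def by (intro exI[of _ "t s # sorted_list_of_set (s \<inter> set xs)"]) auto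
    then obtain l where l: "List.find ?P tab = Some l"
      using find_None_iff[of ?P tab] by (cases "List.find ?P tab") auto
    then have lin: "l \<in> set tab" "?P l" unfolding find_Some_iff by auto
    then obtain s' where s': "s' \<in> \<Sigma>" "l = t s' # sorted_list_of_set (s' \<inter> set xs)"
      using sl unfolding tab_def by auto
    have "s' \<inter> set xs = s \<inter> set xs" using lin(2) s' by simp
    then have "s' = s" using sep s s' by blast
    then show ?thesis unfolding hq_def using l s' by simp
  qed
  then show ?thesis by blast
qed

lemma UNIV_nonnull: "(UNIV::real set) \<notin> null_sets lebesgue"
  using null_sets_completion_iff[of UNIV lborel] by (simp add: null_sets_def)

context setting
begin

definition h :: "real set \<Rightarrow> real \<Rightarrow> real" where "h s x = hq s (d x)"

definition Fs :: "real set \<Rightarrow> real \<Rightarrow> real \<Rightarrow> real" where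
  "Fs s a x = (if x \<in> underS W a then h s x else 0)"

lemma fiber_targets:
  assumes "M \<in> sets lebesgue" "M \<notin> null_sets lebesgue" "finite \<Sigma>"
  shows "\<exists>x\<in>M. \<forall>s\<in>\<Sigma>. h s x = t s"
proof -
  obtain q where q: "\<forall>s\<in>\<Sigma>. hq s q = t s" using code_exists[OF assms(3)] by blast
  obtain x where "x \<in> M" "d x = q" using fiber[OF assms(1,2)] by blast
  then show ?thesis using q unfolding h_def by auto
qed

lemma inj_Fs: "inj Fs"
proof (rule injI)
  fix s s' assume eq: "Fs s = Fs s'"
  show "s = s'"
  proof (rule ccontr)
    assume ne: "s \<noteq> s'"
    obtain x where x: "\<forall>r\<in>{s, s'}. h r x = (if r = s then 1 else 0)"
      using fiber_targets[of UNIV "{s, s'}" "\<lambda>r. if r = s then 1 else 0"] UNIV_nonnull by auto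
    obtain a where a: "x \<in> underS W a" using no_max by blast
    have "Fs s a x = 1" "Fs s' a x = 0" using x a ne unfolding Fs_def by auto
    then show False using eq by simp
  qed
qed

lemma get_sigma:
  assumes "F ` {..<n} \<subseteq> range Fs"
  obtains \<sigma> where "\<And>i. i < n \<Longrightarrow> F i = Fs (\<sigma> i)"
proof -
  define \<sigma> where "\<sigma> i = (SOME s. F i = Fs s)" for i
  have "F i = Fs (\<sigma> i)" if "i < n" for i
  proof -
    have "\<exists>s. F i = Fs s" using assms that by auto
    then show ?thesis unfolding \<sigma>_def by (rule someI_ex)
  qed
  then show ?thesis using that by blast
qed

lemma indep: "alg_independent (range Fs)"
  unfolding alg_independent_def
proof (intro allI impI)
  fix n c F
  assume A: "is_poly n c \<and> c \<noteq> (\<lambda>_. 0) \<and> inj_on F {..<n} \<and> F ` {..<n} \<subseteq> range Fs"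
  then have P: "is_poly n c" and nz: "c \<noteq> (\<lambda>_. 0)" and inj: "inj_on F {..<n}"
    and sub: "F ` {..<n} \<subseteq> range Fs" by auto
  obtain \<sigma> where \<sigma>: "\<And>i. i < n \<Longrightarrow> F i = Fs (\<sigma> i)" using get_sigma[OF sub] by blast
  have sinj: "inj_on \<sigma> {..<n}"
  proof (rule inj_onI)
    fix i j assume "i \<in> {..<n}" "j \<in> {..<n}" "\<sigma> i = \<sigma> j"
    then show "i = j" using \<sigma> inj by (metis inj_onD lessThan_iff)
  qed
  obtain y where y: "Pv c y \<noteq> 0" using Pv_nonroot[OF P nz] by blast
  define t where "t s = y (the_inv_into {..<n} \<sigma> s)" for s
  obtain x where x: "\<forall>s\<in>\<sigma> ` {..<n}. h s x = t s"
    using fiber_targets[of UNIV "\<sigma> ` {..<n}" t] UNIV_nonnull by auto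
  obtain a where a: "x \<in> underS W a" using no_max by blast
  have "F i a x = y i" if "i < n" for i
    using \<sigma>[OF that] x that a the_inv_into_f_f[OF sinj] unfolding Fs_def t_def by auto
  then have "poly_eval c F a x = Pv c y"
    unfolding poly_eval_Pv by (rule Pv_cong[OF P])
  then have ne: "poly_eval c F a x \<noteq> 0" using y by simp
  show "poly_eval c F \<noteq> (\<lambda>_ _. 0)"
  proof
    assume "poly_eval c F = (\<lambda>_ _. 0)"
    then show False using ne by simp
  qed
qed

lemma in_AN:
  assumes f: "f \<in> gen_algebra (range Fs)" and fnz: "f \<noteq> (\<lambda>_ _. 0)"
  shows "f \<in> AN_c W"
proof -
  obtain n c F where fe: "f = poly_eval c F" and P: "is_poly n c" and nc: "no_const c"
    and sub: "F ` {..<n} \<subseteq> range Fs"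
    using f unfolding gen_algebra_def by blast
  obtain \<sigma> where \<sigma>: "\<And>i. i < n \<Longrightarrow> F i = Fs (\<sigma> i)" using get_sigma[OF sub] by blast
  define G where "G x = Pv c (\<lambda>i. h (\<sigma> i) x)" for x
  have fa: "f a x = (if x \<in> underS W a then G x else 0)" for a x
  proof (cases "x \<in> underS W a")
    case True
    have "f a x = Pv c (\<lambda>i. F i a x)" unfolding fe poly_eval_Pv ..
    also have "\<dots> = G x" unfolding G_def
      by (rule Pv_cong[OF P]) (use \<sigma> True in \<open>auto simp: Fs_def\<close>)
    finally show ?thesis using True by simp
  next
    case False
    have "f a x = Pv c (\<lambda>i. F i a x)" unfolding fe poly_eval_Pv ..
    also have "\<dots> = Pv c (\<lambda>_. 0)"
      by (rule Pv_cong[OF P]) (use \<sigma> False in \<open>auto simp: Fs_def\<close>)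
    also have "\<dots> = 0" using Pv_zero[OF P] nc unfolding no_const_def by simp
    finally show ?thesis using False by simp
  qed
  have meas: "f a \<in> borel_measurable lebesgue" for a
  proof -
    have "AE x in lebesgue. x \<notin> underS W a" using underS_null by (rule AE_not_in)
    then have "AE x in lebesgue. (\<lambda>_. 0::real) x = f a x" by eventually_elim (simp add: fa)
    then show ?thesis by (rule borel_measurable_AE[rotated]) simp
  qed
  have conv: "AE x in lebesgue. wconv W (\<lambda>a. f a x) (G x)"
  proof (rule AE_I2)
    fix x
    show "wconv W (\<lambda>a. f a x) (G x)"
      unfolding wconv_def
    proof (intro allI impI exI[of _ x])
      fix U a assume "open U \<and> G x \<in> U" "(x, a) \<in> W \<and> a \<noteq> x"
      then show "f a x \<in> U" using fa[of a x] by (auto simp: underS_def)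
    qed
  qed
  have "\<exists>a0 x0. f a0 x0 \<noteq> 0"
  proof (rule ccontr)
    assume "\<not> ?thesis"
    then have "f = (\<lambda>_ _. 0)" by (intro ext) simp
    then show False using fnz by simp
  qed
  then obtain a0 x0 where "f a0 x0 \<noteq> 0" by blast
  then have G0: "G x0 \<noteq> 0" using fa by (auto split: if_splits)
  have fin: "finite (\<sigma> ` {..<n})" by simp
  have notm: "G \<notin> borel_measurable lebesgue"
  proof
    assume Gm: "G \<in> borel_measurable lebesgue"
    define Z where "Z = G -` {0}"
    have Zm: "Z \<in> sets lebesgue"
      using measurable_sets[OF Gm, of "{0}"] unfolding Z_def by simp
    have "Z \<notin> null_sets lebesgue \<or> -Z \<notin> null_sets lebesgue"
    proof (rule ccontr)
      assume "\<not> ?thesis"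
      then have "Z \<union> -Z \<in> null_sets lebesgue" using null_sets.Un by blast
      moreover have "Z \<union> -Z = UNIV" by blast
      ultimately show False using UNIV_nonnull by simp
    qed
    then show False
    proof
      assume "Z \<notin> null_sets lebesgue"
      then obtain x where x: "x \<in> Z" "\<forall>s\<in>\<sigma> ` {..<n}. h s x = h s x0"
        using fiber_targets[OF Zm _ fin, of "\<lambda>s. h s x0"] by blast
      have "G x = G x0" unfolding G_def by (rule Pv_cong[OF P]) (use x in auto)
      then show False using x(1) G0 unfolding Z_def by simp
    next
      assume "-Z \<notin> null_sets lebesgue"
      moreover have "-Z \<in> sets lebesgue" using Zm by (simp add: Compl_in_sets_lebesgue)
      ultimately obtain x where x: "x \<in> -Z" "\<forall>s\<in>\<sigma> ` {..<n}. h s x = 0"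
        using fiber_targets[OF _ _ fin, of "-Z" "\<lambda>_. 0"] by blast
      have "G x = Pv c (\<lambda>_. 0)" unfolding G_def by (rule Pv_cong[OF P]) (use x in auto)
      also have "\<dots> = 0" using Pv_zero[OF P] nc unfolding no_const_def by simp
      finally show False using x(1) unfolding Z_def by simp
    qed
  qed
  show ?thesis unfolding AN_c_def using meas conv notm by blast
qed

end

theorem mainTheorem17:
  fixes W :: "real rel"
  assumes "card_order W"
    and "nonN_eq_c"
  shows "strongly_algebrable (card_of (Pow (UNIV::real set))) (AN_c W)"
proof -
  obtain e :: "real \<Rightarrow> code" where e: "surj e" by (rule code_surj)
  interpret setting W e using assms e by unfold_locales
  have "bij_betw Fs UNIV (range Fs)" using inj_Fs by (simp add: bij_betw_def)
  then have "(card_of (UNIV::real set set), card_of (range Fs)) \<in> ordIso"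
    using card_of_ordIso by blast
  then have "(card_of (range Fs), card_of (Pow (UNIV::real set))) \<in> ordIso"
    using ordIso_symmetric by simp
  then show ?thesis unfolding strongly_algebrable_def
    by (intro exI[of _ "range Fs"] conjI ballI impI indep in_AN)
qed


end
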